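(* Let $0<b<a<n$, let $\ell\in\{-1,1\}^n$, and let $A$ be the adjacency matrix of $SBM(a/n,b/n)$ with communities labelled by $\ell$. Let $C=(\sqrt a-\sqrt b)^2$, $L=\ell\ell^T$, and let $0<\beta<10^{-6}$, $\kappa\ge1$. Define $Q=C/2-\log(1/\beta)-3\kappa$. Then with probability at least $1-e^{-\kappa\beta n}-1/n^3$, for all $x_1,\dots,x_n\in[0,1]$ with $x_1+\dots+x_n=\beta n$, \[ \Big\langle (A-D(a/n,b/n)J)\odot L,\ X\Big\rangle\ \ge\ 2\beta n\Big(\frac{Q}{\log R(a/n,b/n)}-\sqrt{a+b}\Big), \] where $X$ is the $n\times n$ matrix with $X_{ij}=x_i$.
   Context: $SBM(a/n,b/n)$ with communities labelled by $\ell\in\{-1,1\}^n$: the adjacency matrix $A$ is symmetric with zero diagonal, and the entries $A_{ij}$, $i<j$, are independent Bernoulli with mean $a/n$ if $\ell_i=\ell_j$ and $b/n$ otherwise. $J$ is the all-ones matrix, $\odot$ is the entrywise (Hadamard) product, and $\langle X,Y\rangle=\sum_{i,j}X_{ij}Y_{ij}$. $R(p,q)=\frac{p(1-q)}{q(1-p)}$ and $D(p,q)=\log\frac{1-q}{1-p}\big/\log R(p,q)$. *)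

theory Defs
  imports "HOL-Probability.Probability"
begin

(* Vertices are 0..n-1; labels l :: nat => real with l i in {-1,1}. *)

definition Rfun :: "real \<Rightarrow> real \<Rightarrow> real" where
  "Rfun p q = (p * (1 - q)) / (q * (1 - p))"

definition Dfun :: "real \<Rightarrow> real \<Rightarrow> real" where
  "Dfun p q = ln ((1 - q) / (1 - p)) / ln (Rfun p q)"

definition sbm_edges :: "nat \<Rightarrow> real \<Rightarrow> real \<Rightarrow> (nat \<Rightarrow> real) \<Rightarrow> (nat \<times> nat \<Rightarrow> bool) pmf" where
  "sbm_edges n a b l =
     Pi_pmf {(i, j). i < j \<and> j < n} False
       (\<lambda>(i, j). bernoulli_pmf (if l i = l j then a / real n else b / real n))"

definition adj :: "(nat \<times> nat \<Rightarrow> bool) \<Rightarrow> nat \<Rightarrow> nat \<Rightarrow> real" where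
  "adj e i j = (if i < j then (if e (i, j) then 1 else 0)
               else if j < i then (if e (j, i) then 1 else 0) else 0)"

(* SBM(a/n,b/n): distribution of the adjacency matrix (entries outside [0,n) are 0) *)
definition SBM :: "nat \<Rightarrow> real \<Rightarrow> real \<Rightarrow> (nat \<Rightarrow> real) \<Rightarrow> (nat \<Rightarrow> nat \<Rightarrow> real) pmf" where
  "SBM n a b l = map_pmf adj (sbm_edges n a b l)"

definition frob :: "nat \<Rightarrow> (nat \<Rightarrow> nat \<Rightarrow> real) \<Rightarrow> (nat \<Rightarrow> nat \<Rightarrow> real) \<Rightarrow> real" where
  "frob n M N = (\<Sum>i<n. \<Sum>j<n. M i j * N i j)"

end

theory Submission
  imports Defs
begin


lemma quarter_alg:
  fixes A G A' G' :: real
  assumes "A \<ge> 0" "G \<ge> 0" "A' \<ge> 0" "G' \<ge> 0" "A^4 + A'^4 = 1" "G^4 + G'^4 = 1"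
  shows "A^3*G + A'^3*G' \<le> 1 - (A^2 - G^2)^2/4"
proof -
  have h1: "4*(A'^3*G') \<le> 3*A'^4 + G'^4"
  proof -
    have "0 \<le> (A'-G')^2*(3*A'^2+2*A'*G'+G'^2)" using assms by (intro mult_nonneg_nonneg) auto
    thus ?thesis by (simp add: algebra_simps power2_eq_square power4_eq_xxxx power3_eq_cube)
  qed
  have h2: "2*(A^3*G) \<le> A^4 + A^2*G^2"
  proof -
    have "0 \<le> A^2*(A-G)^2" by simp
    thus ?thesis by (simp add: algebra_simps power2_eq_square power3_eq_cube power4_eq_xxxx)
  qed
  have h1': "4*(A'^3*G') \<le> 4 - 3*A^4 - G^4" using h1 assms(5,6) by linarith
  have eq: "(A^2 - G^2)^2 = A^4 - 2*(A^2*G^2) + G^4" by (simp add: algebra_simps power2_eq_square power4_eq_xxxx)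
  show ?thesis unfolding eq using h1' h2 by (simp add: field_simps)
qed

lemma half_alg:
  fixes A G A' G' :: real
  assumes "A^4 + A'^4 = 1" "G^4 + G'^4 = 1"
  shows "A^2*G^2 + A'^2*G'^2 \<le> 1 - (A^2 - G^2)^2/2"
proof -
  have "0 \<le> (A'^2 - G'^2)^2" by simp
  hence "2*(A'^2*G'^2) \<le> A'^4 + G'^4" by (simp add: algebra_simps power2_eq_square power4_eq_xxxx)
  moreover have eq: "(A^2 - G^2)^2 = A^4 - 2*(A^2*G^2) + G^4" by (simp add: algebra_simps power2_eq_square power4_eq_xxxx)
  ultimately show ?thesis unfolding eq using assms by (simp add: field_simps)
qed

definition r4 :: "real \<Rightarrow> real" where "r4 x = exp (ln x / 4)"

lemma r4_pos: "r4 x > 0" by (simp add: r4_def)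
lemma r4_pow4: "x > 0 \<Longrightarrow> r4 x ^ 4 = x"
proof -
  assume "x > 0"
  have "r4 x ^ 4 = exp (of_nat 4 * (ln x / 4))" unfolding r4_def by (subst exp_of_nat_mult) simp
  thus ?thesis using \<open>x>0\<close> by simp
qed
lemma r4_pow2: "x > 0 \<Longrightarrow> r4 x ^ 2 = sqrt x"
proof -
  assume "x > 0"
  have "r4 x ^ 2 = exp (of_nat 2 * (ln x / 4))" unfolding r4_def by (subst exp_of_nat_mult) simp
  also have "\<dots> = exp (ln x / 2)" by simp
  also have "\<dots> = x powr (1/2)" using \<open>x>0\<close> by (simp add: powr_def)
  also have "\<dots> = sqrt x" using \<open>x>0\<close> by (simp add: powr_half_sqrt)
  finally show ?thesis .
qed


lemma r4_mix: assumes "x > 0" "y > 0"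
  shows "exp ((1/4)*ln y - (1/4)*ln x) * x = r4 x ^ 3 * r4 y"
proof -
  have ee: "(1/4)*ln y - (1/4)*ln x = ln y/4 - ln x/4" by simp
  have e: "exp (ln y/4 - ln x/4) = r4 y / r4 x" by (simp add: r4_def exp_diff)
  have "exp (ln y/4 - ln x/4) * x = (r4 y / r4 x) * r4 x ^ 4" by (simp add: e r4_pow4[OF assms(1)])
  also have "\<dots> = r4 x ^ 3 * r4 y" using r4_pos[of x] by (simp add: field_simps power4_eq_xxxx power3_eq_cube)
  finally show ?thesis unfolding ee .
qed

lemma r4_mix2: assumes "x > 0" "y > 0"
  shows "exp ((1/2)*ln y - (1/2)*ln x) * x = r4 x ^ 2 * r4 y ^ 2"
proof -
  have ee: "(1/2)*ln y - (1/2)*ln x = ln y/2 - ln x/2" by simp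
  have e: "exp (ln y/2 - ln x/2) = exp (of_nat 2 * (ln y/4 - ln x/4))" by simp
  have "exp (ln y/4 - ln x/4) = r4 y / r4 x" by (simp add: r4_def exp_diff)
  hence e2: "exp (ln y/2 - ln x/2) = (r4 y / r4 x)^2" unfolding e by (subst exp_of_nat_mult) simp
  have "exp (ln y/2 - ln x/2) * x = (r4 y / r4 x)^2 * r4 x ^ 4" by (simp add: e2 r4_pow4[OF assms(1)])
  also have "\<dots> = r4 x ^ 2 * r4 y ^ 2" using r4_pos[of x] by (simp add: field_simps power4_eq_xxxx power2_eq_square)
  finally show ?thesis unfolding ee .
qed

locale pq =
  fixes p q L D :: real
  assumes q0: "0 < q" and qp: "q < p" and p1: "p < 1"
  and L_def: "L = ln (p*(1-q)/(q*(1-p)))"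
  and D_def: "D = ln ((1-q)/(1-p)) / L"
begin

lemma p0: "0 < p" using q0 qp by simp
lemma q1: "q < 1" using qp p1 by simp

lemma L_eq: "L = ln p - ln q + (ln (1-q) - ln (1-p))"
  using p0 q0 p1 q1 unfolding L_def by (simp add: ln_mult ln_div)

lemma L_pos: "L > 0"
proof -
  have "ln q < ln p" using q0 qp by simp
  moreover have "ln (1-p) < ln (1-q)" using p1 qp by simp
  ultimately show ?thesis using L_eq by simp
qed

lemma LD: "L * D = ln (1-q) - ln (1-p)"
  using L_pos p1 q1 unfolding D_def by (simp add: ln_div)

lemma L1D: "L * (1 - D) = ln p - ln q"
proof -
  have "L * (1 - D) = L - L * D" by (simp add: algebra_simps)
  thus ?thesis using LD L_eq by linarith
qed

lemma ex1: "-(w*L*(1-D)) = w * ln q - w * ln p"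
proof -
  have "w*L*(1-D) = w*(L*(1-D))" by (simp add: mult.assoc)
  also have "\<dots> = w*(ln p - ln q)" by (simp only: L1D)
  finally show ?thesis by (simp add: algebra_simps)
qed
lemma ex1': "w*L*(1-D) = w * ln p - w * ln q"
  using ex1[of w] by linarith
lemma ex2: "w*L*D = w * ln (1-q) - w * ln (1-p)"
proof -
  have "w*L*D = w*(L*D)" by (simp add: mult.assoc)
  also have "\<dots> = w*(ln (1-q) - ln (1-p))" by (simp only: LD)
  finally show ?thesis by (simp add: algebra_simps)
qed
lemma ex2': "-(w*L*D) = w * ln (1-p) - w * ln (1-q)"
  using ex2[of w] by linarith

abbreviation "c1 \<equiv> (sqrt p - sqrt q)^2"

lemma F_plus_14: "exp (-((1/4)*L*(1-D))) * p + exp ((1/4)*L*D) * (1-p) \<le> exp (-(c1/4))"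
proof -
  have a: "exp (-((1/4)*L*(1-D))) * p = r4 p ^ 3 * r4 q"
    unfolding ex1 by (rule r4_mix[OF p0 q0])
  have b: "exp ((1/4)*L*D) * (1-p) = r4 (1-p) ^ 3 * r4 (1-q)"
    unfolding ex2 by (rule r4_mix) (use p1 q1 in auto)
  have "r4 p ^ 3 * r4 q + r4 (1-p) ^ 3 * r4 (1-q) \<le> 1 - (r4 p ^2 - r4 q ^2)^2/4"
    by (rule quarter_alg) (use r4_pos[THEN less_imp_le] r4_pow4 p0 q0 p1 q1 in auto)
  also have "\<dots> = 1 - c1/4" using r4_pow2 p0 q0 by simp
  also have "\<dots> \<le> exp (-(c1/4))" using exp_ge_add_one_self[of "-(c1/4)"] by simp
  finally show ?thesis using a b by simp
qed

lemma F_minus_14: "exp ((1/4)*L*(1-D)) * q + exp (-((1/4)*L*D)) * (1-q) \<le> exp (-(c1/4))"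
proof -
  have a: "exp ((1/4)*L*(1-D)) * q = r4 q ^ 3 * r4 p"
    unfolding ex1' by (rule r4_mix[OF q0 p0])
  have b: "exp (-((1/4)*L*D)) * (1-q) = r4 (1-q) ^ 3 * r4 (1-p)"
    unfolding ex2' by (rule r4_mix) (use p1 q1 in auto)
  have "r4 q ^ 3 * r4 p + r4 (1-q) ^ 3 * r4 (1-p) \<le> 1 - (r4 q ^2 - r4 p ^2)^2/4"
    by (rule quarter_alg) (use r4_pos[THEN less_imp_le] r4_pow4 p0 q0 p1 q1 in auto)
  also have "(r4 q ^2 - r4 p ^2)^2 = c1" using r4_pow2 p0 q0 by (simp add: power2_commute)
  also have "1 - c1/4 \<le> exp (-(c1/4))" using exp_ge_add_one_self[of "-(c1/4)"] by simp
  finally show ?thesis using a b by simp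
qed

lemma F_plus_12: "exp (-((1/2)*L*(1-D))) * p + exp ((1/2)*L*D) * (1-p) \<le> exp (-(c1/2))"
proof -
  have a: "exp (-((1/2)*L*(1-D))) * p = r4 p ^ 2 * r4 q ^ 2"
    unfolding ex1 by (rule r4_mix2[OF p0 q0])
  have b: "exp ((1/2)*L*D) * (1-p) = r4 (1-p) ^ 2 * r4 (1-q) ^ 2"
    unfolding ex2 by (rule r4_mix2) (use p1 q1 in auto)
  have "r4 p ^ 2 * r4 q ^ 2 + r4 (1-p) ^ 2 * r4 (1-q) ^ 2 \<le> 1 - (r4 p ^2 - r4 q ^2)^2/2"
    by (rule half_alg) (use r4_pow4 p0 q0 p1 q1 in auto)
  also have "\<dots> = 1 - c1/2" using r4_pow2 p0 q0 by simp
  also have "\<dots> \<le> exp (-(c1/2))" using exp_ge_add_one_self[of "-(c1/2)"] by simp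
  finally show ?thesis using a b by simp
qed

lemma F_minus_12: "exp ((1/2)*L*(1-D)) * q + exp (-((1/2)*L*D)) * (1-q) \<le> exp (-(c1/2))"
proof -
  have a: "exp ((1/2)*L*(1-D)) * q = r4 q ^ 2 * r4 p ^ 2"
    unfolding ex1' by (rule r4_mix2[OF q0 p0])
  have b: "exp (-((1/2)*L*D)) * (1-q) = r4 (1-q) ^ 2 * r4 (1-p) ^ 2"
    unfolding ex2' by (rule r4_mix2) (use p1 q1 in auto)
  have "r4 q ^ 2 * r4 p ^ 2 + r4 (1-q) ^ 2 * r4 (1-p) ^ 2 \<le> 1 - (r4 q ^2 - r4 p ^2)^2/2"
    by (rule half_alg) (use r4_pow4 p0 q0 p1 q1 in auto)
  also have "(r4 q ^2 - r4 p ^2)^2 = c1" using r4_pow2 p0 q0 by (simp add: power2_commute)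
  also have "1 - c1/2 \<le> exp (-(c1/2))" using exp_ge_add_one_self[of "-(c1/2)"] by simp
  finally show ?thesis using a b by simp
qed

lemma F_plus_1: "exp (-(L*(1-D))) * p + exp (L*D) * (1-p) = 1"
proof -
  have "exp (-(L*(1-D))) * p = q" using ex1[of 1] p0 q0 by (simp add: exp_diff)
  moreover have "exp (L*D) * (1-p) = 1 - q" using ex2[of 1] p1 q1 by (simp add: exp_diff)
  ultimately show ?thesis by simp
qed

lemma F_minus_1: "exp (L*(1-D)) * q + exp (-(L*D)) * (1-q) = 1"
proof -
  have "exp (L*(1-D)) * q = p" using ex1'[of 1] p0 q0 by (simp add: exp_diff)
  moreover have "exp (-(L*D)) * (1-q) = 1 - p" using ex2'[of 1] p1 q1 by (simp add: exp_diff)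
  ultimately show ?thesis by simp
qed

end


lemma sum_sq_split:
  fixes g :: "nat \<Rightarrow> nat \<Rightarrow> 'a::comm_monoid_add"
  shows "(\<Sum>i<n. \<Sum>j<n. g i j) = (\<Sum>i<n. g i i) + (\<Sum>j<n. \<Sum>i<j. g i j + g j i)"
proof (induction n)
  case 0 then show ?case by simp
next
  case (Suc n)
  have "(\<Sum>i<Suc n. \<Sum>j<Suc n. g i j) = (\<Sum>i<n. \<Sum>j<Suc n. g i j) + (\<Sum>j<Suc n. g n j)"
    by simp
  also have "(\<Sum>i<n. \<Sum>j<Suc n. g i j) = (\<Sum>i<n. \<Sum>j<n. g i j) + (\<Sum>i<n. g i n)"
    by (simp add: sum.distrib)
  also have "(\<Sum>j<Suc n. g n j) = (\<Sum>j<n. g n j) + g n n" by simp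
  finally have "(\<Sum>i<Suc n. \<Sum>j<Suc n. g i j) = (\<Sum>i<n. \<Sum>j<n. g i j) + ((\<Sum>i<n. g i n) + (\<Sum>j<n. g n j)) + g n n"
    by (simp add: ac_simps)
  also have "\<dots> = (\<Sum>i<Suc n. g i i) + (\<Sum>j<Suc n. \<Sum>i<j. g i j + g j i)"
    using Suc by (simp add: sum.distrib ac_simps)
  finally show ?case .
qed

definition edges :: "nat \<Rightarrow> (nat \<times> nat) set" where
  "edges n = {(i, j). i < j \<and> j < n}"

lemma edges_eq: "edges n = (\<lambda>(j,i). (i,j)) ` (SIGMA j:{..<n}. {..<j})"
  unfolding edges_def by (auto simp: image_iff)

lemma finite_edges: "finite (edges n)"
  unfolding edges_eq by auto

lemma sum_edges: "(\<Sum>x\<in>edges n. f x) = (\<Sum>j<n. \<Sum>i<j. f (i,j))"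
proof -
  have inj: "inj_on (\<lambda>(j,i). (i::nat,j::nat)) (SIGMA j:{..<n}. {..<j})" by (auto simp: inj_on_def)
  have "(\<Sum>x\<in>edges n. f x) = (\<Sum>x\<in>(SIGMA j:{..<n}. {..<j}). f ((\<lambda>(j,i). (i,j)) x))"
    unfolding edges_eq by (subst sum.reindex[OF inj]) (simp add: o_def)
  also have "\<dots> = (\<Sum>(j,i)\<in>(SIGMA j:{..<n}. {..<j}). f (i,j))"
    by (intro sum.cong) auto
  also have "\<dots> = (\<Sum>j<n. \<Sum>i<j. f (i,j))"
    by (rule sum.Sigma[symmetric]) auto
  finally show ?thesis .
qed


locale sbm =
  fixes n :: nat and a b :: real and l :: "nat \<Rightarrow> real"
  assumes b0: "0 < b" and ba: "b < a" and an: "a < real n"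
    and lpm: "\<forall>i<n. l i = -1 \<or> l i = 1"
begin

definition "pp = a / real n"
definition "qq = b / real n"
definition "LL = ln (Rfun pp qq)"
definition "DD = Dfun pp qq"

lemma n_pos: "real n > 0" using b0 ba an by linarith

lemma pq_inst: "pq pp qq LL DD"
proof
  show "0 < qq" using b0 n_pos by (simp add: qq_def)
  show "qq < pp" using ba n_pos by (simp add: qq_def pp_def divide_strict_right_mono)
  show "pp < 1" using an n_pos by (simp add: pp_def)
  show "LL = ln (pp * (1 - qq) / (qq * (1 - pp)))" by (simp add: LL_def Rfun_def)
  show "DD = ln ((1 - qq) / (1 - pp)) / LL" by (simp add: DD_def Dfun_def LL_def)
qed

interpretation P: pq pp qq LL DD by (rule pq_inst)

lemma ll: "i < n \<Longrightarrow> l i * l i = 1" using lpm by force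

lemma lprod: "i < n \<Longrightarrow> j < n \<Longrightarrow> (l i * l j = 1 \<and> l i = l j) \<or> (l i * l j = -1 \<and> l i \<noteq> l j)"
  using lpm[rule_format, of i] lpm[rule_format, of j] by auto

definition "sv A i = (\<Sum>j<n. (A i j - DD) * (l i * l j))"
definition "cS S x = (if fst x \<in> S then 1 else 0) + (if snd x \<in> S then (1::real) else 0)"
definition "wt e x = ((if e x then 1 else 0) - DD) * (l (fst x) * l (snd x))"

lemma Y_eq:
  assumes S: "S \<subseteq> {..<n}"
  shows "(\<Sum>i\<in>S. sv (adj e) i) = -(real (card S) * DD) + (\<Sum>x\<in>edges n. cS S x * wt e x)"
proof -
  define g where "g i j = (if i \<in> S then (adj e i j - DD) * (l i * l j) else 0)" for i j
  have "(\<Sum>i\<in>S. sv (adj e) i) = (\<Sum>i\<in>{..<n} \<inter> S. sv (adj e) i)"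
    using S by (simp add: Int_absorb1)
  also have "\<dots> = (\<Sum>i<n. if i \<in> S then sv (adj e) i else 0)"
    by (simp add: sum.inter_restrict)
  also have "\<dots> = (\<Sum>i<n. \<Sum>j<n. g i j)"
    by (intro sum.cong) (auto simp: g_def sv_def)
  also have "\<dots> = (\<Sum>i<n. g i i) + (\<Sum>j<n. \<Sum>i<j. g i j + g j i)"
    by (rule sum_sq_split)
  also have "(\<Sum>i<n. g i i) = (\<Sum>i<n. if i \<in> S then - DD else 0)"
    by (intro sum.cong) (auto simp: g_def adj_def ll)
  also have "\<dots> = (\<Sum>i\<in>{..<n} \<inter> S. - DD)"
    by (simp only: sum.inter_restrict[OF finite_lessThan])
  also have "\<dots> = -(real (card S) * DD)"
    using S by (simp add: Int_absorb1)
  also have "(\<Sum>j<n. \<Sum>i<j. g i j + g j i) = (\<Sum>j<n. \<Sum>i<j. cS S (i,j) * wt e (i,j))"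
  proof (intro sum.cong refl)
    fix j i assume j: "j \<in> {..<n}" and i: "i \<in> {..<j}"
    hence ij: "i < j" "j < n" by auto
    show "g i j + g j i = cS S (i,j) * wt e (i,j)"
      using ij by (auto simp: g_def cS_def wt_def adj_def algebra_simps)
  qed
  also have "\<dots> = (\<Sum>x\<in>edges n. cS S x * wt e x)"
    by (rule sum_edges[symmetric])
  finally show ?thesis .
qed

definition "Pf = (\<lambda>(i,j). bernoulli_pmf (if l i = l j then a / real n else b / real n))"

lemma edges_M: "sbm_edges n a b l = Pi_pmf (edges n) False Pf"
  unfolding sbm_edges_def edges_def Pf_def by simp

lemma finite_M: "finite (set_pmf (sbm_edges n a b l))"
  unfolding edges_M set_Pi_pmf[OF finite_edges]
  by (rule finite_PiE_dflt) (auto simp: finite_edges intro: finite_subset[of _ UNIV])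

lemma chernoff_set:
  assumes S: "S \<subseteq> {..<n}" and lam: "lam \<ge> 0"
  shows "measure_pmf.prob (sbm_edges n a b l) {e. (\<Sum>i\<in>S. sv (adj e) i) < T}
     \<le> exp (lam * T + lam * real (card S) * DD) *
        (\<Prod>x\<in>edges n. measure_pmf.expectation (Pf x)
            (\<lambda>v. exp (-(lam * (cS S x * (((if v then 1 else 0) - DD) * (l (fst x) * l (snd x))))))))"
proof -
  let ?M = "sbm_edges n a b l"
  let ?Y = "\<lambda>e. (\<Sum>i\<in>S. sv (adj e) i)"
  define f where "f = (\<lambda>x v. exp (-(lam * (cS S x * (((if v then 1 else 0) - DD) * (l (fst x) * l (snd x)))))))"
  have int: "integrable (measure_pmf ?M) h" for h :: "_ \<Rightarrow> real"
    by (rule integrable_measure_pmf_finite[OF finite_M])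
  have "measure_pmf.prob ?M {e. ?Y e < T} = measure_pmf.expectation ?M (indicator {e. ?Y e < T})"
    by simp
  also have "\<dots> \<le> measure_pmf.expectation ?M (\<lambda>e. exp (lam * (T - ?Y e)))"
  proof (rule integral_mono[OF int int])
    fix e
    show "indicator {e. ?Y e < T} e \<le> exp (lam * (T - ?Y e))"
    proof (cases "?Y e < T")
      case True
      hence "0 \<le> lam * (T - ?Y e)" using lam by simp
      hence "1 \<le> exp (lam * (T - ?Y e))" by simp
      thus ?thesis using True by simp
    qed simp
  qed
  also have "(\<lambda>e. exp (lam * (T - ?Y e))) = (\<lambda>e. exp (lam * T + lam * real (card S) * DD) * (\<Prod>x\<in>edges n. f x (e x)))"
  proof
    fix e
    have "lam * (T - ?Y e) = (lam * T + lam * real (card S) * DD) + (\<Sum>x\<in>edges n. -(lam * (cS S x * wt e x)))"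
      unfolding Y_eq[OF S] by (simp add: algebra_simps sum_distrib_left sum_negf)
    hence "exp (lam * (T - ?Y e)) = exp (lam * T + lam * real (card S) * DD) * exp (\<Sum>x\<in>edges n. -(lam * (cS S x * wt e x)))"
      by (simp add: exp_add)
    also have "exp (\<Sum>x\<in>edges n. -(lam * (cS S x * wt e x))) = (\<Prod>x\<in>edges n. f x (e x))"
      by (simp add: exp_sum finite_edges f_def wt_def)
    finally show "exp (lam * (T - ?Y e)) = exp (lam * T + lam * real (card S) * DD) * (\<Prod>x\<in>edges n. f x (e x))" .
  qed
  also have "measure_pmf.expectation ?M (\<lambda>e. exp (lam * T + lam * real (card S) * DD) * (\<Prod>x\<in>edges n. f x (e x)))
       = exp (lam * T + lam * real (card S) * DD) * measure_pmf.expectation ?M (\<lambda>e. \<Prod>x\<in>edges n. f x (e x))"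
    by simp
  also have "measure_pmf.expectation ?M (\<lambda>e. \<Prod>x\<in>edges n. f x (e x)) = (\<Prod>x\<in>edges n. measure_pmf.expectation (Pf x) (f x))"
    unfolding edges_M
    by (rule expectation_prod_Pi_pmf[OF finite_edges])
       (auto simp: f_def Pf_def split: prod.splits intro!: integrable_measure_pmf_finite intro: finite_subset[of _ UNIV])
  finally show ?thesis by (simp add: f_def)
qed

end


context sbm begin

interpretation P: pq pp qq LL DD by (rule pq_inst)

definition "ind S i = (if i \<in> S then (1::real) else 0)"

lemma sum_ind: "S \<subseteq> {..<n} \<Longrightarrow> (\<Sum>i<n. ind S i) = real (card S)"
proof -
  assume S: "S \<subseteq> {..<n}"
  have "(\<Sum>i<n. ind S i) = (\<Sum>i\<in>{..<n} \<inter> S. 1)"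
    unfolding ind_def by (simp only: sum.inter_restrict[OF finite_lessThan])
  thus ?thesis using S by (simp add: Int_absorb1)
qed

lemma count1: assumes S: "S \<subseteq> {..<n}"
  shows "(\<Sum>x\<in>edges n. cS S x) = real (card S) * (real n - 1)"
proof -
  have "(\<Sum>i<n. \<Sum>j<n. ind S i) = (\<Sum>i<n. ind S i) + (\<Sum>j<n. \<Sum>i<j. ind S i + ind S j)"
    by (rule sum_sq_split)
  moreover have "(\<Sum>i<n. \<Sum>j<n. ind S i) = real n * real (card S)"
    using sum_ind[OF S] by (simp add: sum_distrib_left[symmetric] mult.commute)
  moreover have "(\<Sum>x\<in>edges n. cS S x) = (\<Sum>j<n. \<Sum>i<j. ind S i + ind S j)"
    unfolding sum_edges by (simp add: cS_def ind_def)
  ultimately show ?thesis using sum_ind[OF S] by (simp add: algebra_simps)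
qed

lemma count2: assumes S: "S \<subseteq> {..<n}"
  shows "(\<Sum>x\<in>edges n. ind S (fst x) * ind S (snd x)) = (real (card S)^2 - real (card S)) / 2"
proof -
  have "(\<Sum>i<n. \<Sum>j<n. ind S i * ind S j) = (\<Sum>i<n. ind S i * ind S i) + (\<Sum>j<n. \<Sum>i<j. ind S i * ind S j + ind S j * ind S i)"
    by (rule sum_sq_split)
  moreover have "(\<Sum>i<n. \<Sum>j<n. ind S i * ind S j) = real (card S)^2"
    using sum_ind[OF S] by (simp add: sum_distrib_left[symmetric] sum_distrib_right[symmetric] power2_eq_square)
  moreover have "(\<Sum>i<n. ind S i * ind S i) = real (card S)"
  proof -
    have "(\<Sum>i<n. ind S i * ind S i) = (\<Sum>i<n. ind S i)" by (intro sum.cong) (auto simp: ind_def)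
    thus ?thesis using sum_ind[OF S] by simp
  qed
  moreover have "(\<Sum>x\<in>edges n. ind S (fst x) * ind S (snd x)) = (\<Sum>j<n. \<Sum>i<j. ind S i * ind S j)"
    unfolding sum_edges by simp
  moreover have "(\<Sum>j<n. \<Sum>i<j. ind S i * ind S j + ind S j * ind S i) = 2 * (\<Sum>j<n. \<Sum>i<j. ind S i * ind S j)"
    by (simp add: sum_distrib_left mult.commute)
  ultimately show ?thesis by simp
qed

lemma fac_expect:
  assumes x: "x \<in> edges n"
  shows "measure_pmf.expectation (Pf x) (\<lambda>v. exp (-(th * (((if v then 1 else 0) - DD) * (l (fst x) * l (snd x))))))
     = (if l (fst x) = l (snd x) then exp (-(th*(1-DD))) * pp + exp (th*DD) * (1-pp)
        else exp (th*(1-DD)) * qq + exp (-(th*DD)) * (1-qq))"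
proof -
  obtain i j where xij: "x = (i,j)" "i < j" "j < n" using x by (auto simp: edges_def)
  have ppb: "0 \<le> pp" "pp \<le> 1" "0 \<le> qq" "qq \<le> 1" using P.p0 P.q0 P.p1 P.q1 by auto
  show ?thesis
  proof (cases "l i = l j")
    case True
    hence "l i * l j = 1" using ll xij by simp
    thus ?thesis using True ppb xij by (simp add: Pf_def pp_def[symmetric] algebra_simps)
  next
    case False
    hence "l i * l j = -1" using lprod[of i j] xij by auto
    thus ?thesis using False ppb xij by (simp add: Pf_def qq_def[symmetric] algebra_simps)
  qed
qed

end


context sbm begin

interpretation P: pq pp qq LL DD by (rule pq_inst)

abbreviation "EXf x th \<equiv> measure_pmf.expectation (Pf x) (\<lambda>v. exp (-(th * (((if v then 1 else 0) - DD) * (l (fst x) * l (snd x))))))"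

lemma fb0: "x \<in> edges n \<Longrightarrow> EXf x 0 = 1"
  by (subst fac_expect) auto

lemma fb1: "x \<in> edges n \<Longrightarrow> EXf x LL = 1"
  by (subst fac_expect) (auto simp: P.F_plus_1 P.F_minus_1)

lemma fb12: "x \<in> edges n \<Longrightarrow> EXf x (LL/2) \<le> exp (-(P.c1/2))"
proof (subst fac_expect)
  assume "x \<in> edges n"
  have e1: "LL/2*(1-DD) = (1/2)*LL*(1-DD)" "LL/2*DD = (1/2)*LL*DD" by simp_all
  show "(if l (fst x) = l (snd x) then exp (-(LL/2*(1-DD))) * pp + exp (LL/2*DD) * (1-pp)
        else exp (LL/2*(1-DD)) * qq + exp (-(LL/2*DD)) * (1-qq)) \<le> exp (-(P.c1/2))"
    unfolding e1 using P.F_plus_12 P.F_minus_12 by simp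
qed simp

lemma fb14: "x \<in> edges n \<Longrightarrow> EXf x (LL/4) \<le> exp (-(P.c1/4))"
proof (subst fac_expect)
  assume "x \<in> edges n"
  have e1: "LL/4*(1-DD) = (1/4)*LL*(1-DD)" "LL/4*DD = (1/4)*LL*DD" by simp_all
  show "(if l (fst x) = l (snd x) then exp (-(LL/4*(1-DD))) * pp + exp (LL/4*DD) * (1-pp)
        else exp (LL/4*(1-DD)) * qq + exp (-(LL/4*DD)) * (1-qq)) \<le> exp (-(P.c1/4))"
    unfolding e1 using P.F_plus_14 P.F_minus_14 by simp
qed simp

lemma EXf_nonneg: "EXf x th \<ge> 0"
  by (intro Bochner_Integration.integral_nonneg) simp

lemma cS_cases: "cS S x = 0 \<or> cS S x = 1 \<or> cS S x = 2"
  by (auto simp: cS_def)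

lemma integrand_eq: "(\<lambda>v. exp (-(lam * (cS S x * (((if v then 1 else 0) - DD) * (l (fst x) * l (snd x)))))))
   = (\<lambda>v. exp (-((lam * cS S x) * (((if v then 1 else 0) - DD) * (l (fst x) * l (snd x))))))"
  by (simp add: mult.assoc)

lemma set_bound_half:
  assumes S: "S \<subseteq> {..<n}"
  shows "measure_pmf.prob (sbm_edges n a b l) {e. (\<Sum>i\<in>S. sv (adj e) i) < T}
     \<le> exp ((LL/2) * T + (LL/2) * real (card S) * DD) *
        exp (-(P.c1 * (real (card S) * (real n - 1) / 2 - (real (card S)^2 - real (card S)) / 2)))"
proof -
  have LLp: "LL/2 \<ge> 0" using P.L_pos by simp
  have fac: "EXf x ((LL/2) * cS S x) \<le> exp (-(P.c1 * (cS S x / 2 - ind S (fst x) * ind S (snd x))))"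
    if x: "x \<in> edges n" for x
    using cS_cases[of S x] fb0[OF x] fb12[OF x] fb1[OF x]
    by (auto simp: cS_def ind_def split: if_splits)
  have "(\<Prod>x\<in>edges n. EXf x ((LL/2) * cS S x)) \<le> (\<Prod>x\<in>edges n. exp (-(P.c1 * (cS S x / 2 - ind S (fst x) * ind S (snd x)))))"
    by (intro prod_mono conjI EXf_nonneg fac)
  also have "\<dots> = exp (\<Sum>x\<in>edges n. -(P.c1 * (cS S x / 2 - ind S (fst x) * ind S (snd x))))"
    by (simp add: exp_sum finite_edges)
  also have "(\<Sum>x\<in>edges n. -(P.c1 * (cS S x / 2 - ind S (fst x) * ind S (snd x))))
     = -(P.c1 * ((\<Sum>x\<in>edges n. cS S x) / 2 - (\<Sum>x\<in>edges n. ind S (fst x) * ind S (snd x))))"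
  proof -
    have "(\<Sum>x\<in>edges n. -(P.c1 * (cS S x / 2 - ind S (fst x) * ind S (snd x))))
      = -(P.c1 * (\<Sum>x\<in>edges n. cS S x / 2 - ind S (fst x) * ind S (snd x)))"
      by (simp add: sum_negf sum_distrib_left)
    also have "(\<Sum>x\<in>edges n. cS S x / 2 - ind S (fst x) * ind S (snd x)) = (\<Sum>x\<in>edges n. cS S x) / 2 - (\<Sum>x\<in>edges n. ind S (fst x) * ind S (snd x))"
      by (simp add: sum_subtractf sum_divide_distrib)
    finally show ?thesis .
  qed
  also have "\<dots> = -(P.c1 * (real (card S) * (real n - 1) / 2 - (real (card S)^2 - real (card S)) / 2))"
    using count1[OF S] count2[OF S] by simp
  finally have prodb: "(\<Prod>x\<in>edges n. EXf x ((LL/2) * cS S x)) \<le> exp (-(P.c1 * (real (card S) * (real n - 1) / 2 - (real (card S)^2 - real (card S)) / 2)))" .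
  have ch: "measure_pmf.prob (sbm_edges n a b l) {e. (\<Sum>i\<in>S. sv (adj e) i) < T}
     \<le> exp ((LL/2) * T + (LL/2) * real (card S) * DD) * (\<Prod>x\<in>edges n. EXf x ((LL/2) * cS S x))"
    using chernoff_set[OF S LLp, of T] unfolding integrand_eq .
  show ?thesis
    using order.trans[OF ch mult_left_mono[OF prodb exp_ge_zero]] .
qed

lemma set_bound_quarter:
  assumes S: "S \<subseteq> {..<n}"
  shows "measure_pmf.prob (sbm_edges n a b l) {e. (\<Sum>i\<in>S. sv (adj e) i) < T}
     \<le> exp ((LL/4) * T + (LL/4) * real (card S) * DD) *
        exp (-(P.c1 * (real (card S) * (real n - 1) / 4)))"
proof -
  have LLp: "LL/4 \<ge> 0" using P.L_pos by simp
  have fac: "EXf x ((LL/4) * cS S x) \<le> exp (-(P.c1 * (cS S x / 4)))"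
    if x: "x \<in> edges n" for x
  proof -
    consider "cS S x = 0" | "cS S x = 1" | "cS S x = 2" using cS_cases[of S x] by blast
    thus ?thesis
    proof cases
      case 1 thus ?thesis using fb0[OF x] by simp
    next
      case 2 thus ?thesis using fb14[OF x] by simp
    next
      case 3
      hence e: "LL/4 * cS S x = LL/2" by simp
      show ?thesis unfolding e using fb12[OF x] 3 by simp
    qed
  qed
  have "(\<Prod>x\<in>edges n. EXf x ((LL/4) * cS S x)) \<le> (\<Prod>x\<in>edges n. exp (-(P.c1 * (cS S x / 4))))"
    by (intro prod_mono conjI EXf_nonneg fac)
  also have "\<dots> = exp (\<Sum>x\<in>edges n. -(P.c1 * (cS S x / 4)))"
    by (simp add: exp_sum finite_edges)
  also have "(\<Sum>x\<in>edges n. -(P.c1 * (cS S x / 4))) = -(P.c1 * ((\<Sum>x\<in>edges n. cS S x) / 4))"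
    by (simp add: sum_negf sum_distrib_left sum_divide_distrib)
  also have "\<dots> = -(P.c1 * (real (card S) * (real n - 1) / 4))"
    using count1[OF S] by simp
  finally have prodb: "(\<Prod>x\<in>edges n. EXf x ((LL/4) * cS S x)) \<le> exp (-(P.c1 * (real (card S) * (real n - 1) / 4)))" .
  have ch: "measure_pmf.prob (sbm_edges n a b l) {e. (\<Sum>i\<in>S. sv (adj e) i) < T}
     \<le> exp ((LL/4) * T + (LL/4) * real (card S) * DD) * (\<Prod>x\<in>edges n. EXf x ((LL/4) * cS S x))"
    using chernoff_set[OF S LLp, of T] unfolding integrand_eq .
  show ?thesis
    using order.trans[OF ch mult_left_mono[OF prodb exp_ge_zero]] .
qed

end


lemma pow_fact_exp: assumes "x \<ge> 0" shows "x ^ k / fact k \<le> exp (x::real)"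
proof -
  have "(\<Sum>n\<in>{k}. x ^ n / fact n) \<le> (\<Sum>n. x ^ n / fact n)"
    by (rule sum_le_suminf) (use summable_exp_generic[of x] assms in \<open>auto simp: divide_inverse ac_simps\<close>)
  thus ?thesis by (simp add: exp_def divide_inverse ac_simps)
qed

lemma kfact: "real (k+1) ^ k / fact k \<le> exp (real k + 1)"
proof -
  have "real (k+1) ^ (k+1) / fact (k+1) \<le> exp (real (k+1))" by (rule pow_fact_exp) simp
  moreover have "real (k+1) ^ (k+1) / fact (k+1) = real (k+1) ^ k / fact k"
  proof -
    have f: "(fact (k+1)::real) = real (k+1) * fact k" by simp
    have p: "real (k+1) ^ (k+1) = real (k+1) * real (k+1) ^ k" by simp
    show ?thesis by (subst f, subst p) (rule mult_divide_mult_cancel_left, simp)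
  qed
  ultimately show ?thesis by (simp add: ac_simps)
qed

lemma mk_bound: assumes m: "0 < m" "m < real k + 1"
  shows "m ^ k / fact k * exp m \<le> exp (2 * real k + 2)"
proof -
  have "m ^ k \<le> real (k+1) ^ k" using m by (intro power_mono) auto
  hence "m ^ k / fact k \<le> real (k+1) ^ k / fact k" by (simp add: divide_right_mono)
  also have "\<dots> \<le> exp (real k + 1)" by (rule kfact)
  finally have a: "m ^ k / fact k \<le> exp (real k + 1)" .
  have b: "exp m \<le> exp (real k + 1)" using m by simp
  have "m ^ k / fact k * exp m \<le> exp (real k + 1) * exp (real k + 1)"
    by (intro mult_mono a b) auto
  also have "\<dots> = exp (2 * real k + 2)" by (simp add: exp_add[symmetric])
  finally show ?thesis .
qed

lemma AR1: assumes m: "0 < m" "m < real k + 1" and k: "k \<ge> 1" and ka: "\<kappa> \<ge> 1"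
  shows "m ^ k / fact k * exp (-(3 * \<kappa> * real k)) \<le> exp (-(\<kappa> * m))"
proof -
  have key: "m ^ k / fact k * exp m \<le> exp (3 * real k)"
  proof (cases "k = 1")
    case True
    have "m * exp m \<le> 2 * exp 2" using m True by (intro mult_mono) auto
    also have "\<dots> \<le> exp 1 * exp 2" using exp_ge_add_one_self[of 1] by (intro mult_right_mono) auto
    also have "\<dots> = exp 3" by (simp add: exp_add[symmetric])
    finally show ?thesis using True by simp
  next
    case False
    hence "k \<ge> 2" using k by simp
    have "m ^ k / fact k * exp m \<le> exp (2 * real k + 2)" by (rule mk_bound[OF m])
    also have "\<dots> \<le> exp (3 * real k)"
    proof -
      have "real k \<ge> 2" using \<open>k \<ge> 2\<close> by simp
      thus ?thesis by simp
    qed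
    finally show ?thesis .
  qed
  have pos: "3 * real k - m \<ge> 0" using m k by simp
  have "3 * real k - m \<le> \<kappa> * (3 * real k - m)" using ka pos by (simp add: mult_le_cancel_right1)
  hence e: "exp (3 * real k - m) \<le> exp (\<kappa> * (3 * real k - m))" by simp
  have "m ^ k / fact k = m ^ k / fact k * exp m * exp (-m)" by (simp add: exp_minus)
  also have "\<dots> \<le> exp (3 * real k) * exp (-m)" by (intro mult_right_mono key) auto
  also have "\<dots> = exp (3 * real k - m)" by (simp add: exp_diff exp_minus field_simps)
  also have "\<dots> \<le> exp (\<kappa> * (3 * real k - m))" by (rule e)
  finally have "m ^ k / fact k \<le> exp (\<kappa> * (3 * real k - m))" .
  hence "m ^ k / fact k * exp (-(3 * \<kappa> * real k)) \<le> exp (\<kappa> * (3 * real k - m)) * exp (-(3 * \<kappa> * real k))"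
    by (intro mult_right_mono) auto
  also have "\<dots> = exp (-(\<kappa> * m))" by (simp add: exp_add[symmetric] algebra_simps)
  finally show ?thesis .
qed

lemma AR2: assumes m: "0 < m" "m < real k + 1" and k: "k \<ge> 2" and ka: "\<kappa> \<ge> 1"
  shows "m ^ k / fact k * exp (real k * (-(3/2) * \<kappa> - 2)) \<le> exp (-(\<kappa> * m))"
proof -
  have k2: "real k \<ge> 2" using k by simp
  have key: "m ^ k / fact k * exp m \<le> exp (7/2 * real k)"
  proof -
    have "m ^ k / fact k * exp m \<le> exp (2 * real k + 2)" by (rule mk_bound[OF m])
    also have "\<dots> \<le> exp (7/2 * real k)" using k2 by simp
    finally show ?thesis .
  qed
  have pos: "3/2 * real k - m \<ge> 0" using m k2 by linarith
  have kk: "3/2 * real k - m \<le> \<kappa> * (3/2 * real k - m)" using ka pos by (simp add: mult_le_cancel_right1)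
  have "m ^ k / fact k = m ^ k / fact k * exp m * exp (-m)" by (simp add: exp_minus)
  also have "\<dots> \<le> exp (7/2 * real k) * exp (-m)" by (intro mult_right_mono key) auto
  also have "\<dots> = exp ((3/2 * real k - m) + 2 * real k)" by (simp add: exp_add[symmetric])
  also have "\<dots> \<le> exp (\<kappa> * (3/2 * real k - m) + 2 * real k)" using kk by simp
  finally have "m ^ k / fact k \<le> exp (\<kappa> * (3/2 * real k - m) + 2 * real k)" .
  hence "m ^ k / fact k * exp (real k * (-(3/2) * \<kappa> - 2)) \<le> exp (\<kappa> * (3/2 * real k - m) + 2 * real k) * exp (real k * (-(3/2) * \<kappa> - 2))"
    by (intro mult_right_mono) auto
  also have "\<dots> = exp (-(\<kappa> * m))" by (simp add: exp_add[symmetric] algebra_simps)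
  finally show ?thesis .
qed

lemma exists_low:
  fixes s :: "nat \<Rightarrow> real"
  assumes "finite U" "k \<le> card U"
  shows "\<exists>T\<subseteq>U. card T = k \<and> (\<forall>i\<in>T. \<forall>j\<in>U - T. s i \<le> s j)"
  using assms(2)
proof (induction k)
  case 0 thus ?case by (intro exI[of _ "{}"]) auto
next
  case (Suc k)
  then obtain T where T: "T \<subseteq> U" "card T = k" "\<forall>i\<in>T. \<forall>j\<in>U - T. s i \<le> s j" by auto
  have fT: "finite T" using T(1) assms(1) finite_subset by blast
  have "U - T \<noteq> {}"
  proof
    assume "U - T = {}" hence "U \<subseteq> T" by blast
    hence "card U \<le> card T" by (rule card_mono[OF fT])
    thus False using Suc.prems T(2) by simp
  qed
  moreover have "finite (U - T)" using assms(1) by simp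
  ultimately obtain j0 where j0: "j0 \<in> U - T" "\<forall>j\<in>U - T. s j0 \<le> s j"
    using ex_min_if_finite[of "s ` (U - T)"] by (metis (no_types, lifting) arg_min_if_finite(1) arg_min_if_finite(2) not_le)
  show ?case
  proof (intro exI[of _ "insert j0 T"] conjI ballI)
    show "insert j0 T \<subseteq> U" using T(1) j0(1) by auto
    show "card (insert j0 T) = Suc k" using j0(1) fT T(2) by simp
    fix i j assume i: "i \<in> insert j0 T" and j: "j \<in> U - insert j0 T"
    show "s i \<le> s j"
      using i j T(3) j0(2) by auto
  qed
qed

lemma det:
  fixes s x :: "nat \<Rightarrow> real"
  assumes k: "k \<ge> 1" "k \<le> n" and km: "real k \<le> m \<or> k = 1"
    and hyp: "\<And>S. S \<subseteq> {..<n} \<Longrightarrow> card S = k \<Longrightarrow> real k * t \<le> (\<Sum>i\<in>S. s i)"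
    and x: "\<forall>i<n. 0 \<le> x i \<and> x i \<le> 1" and xs: "(\<Sum>i<n. x i) = m"
  shows "m * t \<le> (\<Sum>i<n. x i * s i)"
proof (cases "k = 1")
  case True
  have st: "t \<le> s i" if "i < n" for i
    using hyp[of "{i}"] that True by simp
  have "(\<Sum>i<n. x i * t) = (\<Sum>i<n. x i) * t" by (simp add: sum_distrib_right)
  hence "m * t = (\<Sum>i<n. x i * t)" using xs by simp
  also have "\<dots> \<le> (\<Sum>i<n. x i * s i)"
    using x st by (intro sum_mono mult_left_mono) auto
  finally show ?thesis .
next
  case False
  hence km': "real k \<le> m" using km by simp
  obtain T where T: "T \<subseteq> {..<n}" "card T = k" "\<forall>i\<in>T. \<forall>j\<in>{..<n} - T. s i \<le> s j"
    using exists_low[of "{..<n}" k s] k by auto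
  have fT: "finite T" using T(1) finite_subset by blast
  have Tne: "T \<noteq> {}" using T(2) k by auto
  define mu where "mu = Max (s ` T)"
  have mu_ge: "s i \<le> mu" if "i \<in> T" for i using that fT by (simp add: mu_def)
  have "mu \<in> s ` T" unfolding mu_def using fT Tne by simp
  then obtain i0 where i0: "i0 \<in> T" "mu = s i0" by auto
  have mu_le: "mu \<le> s j" if "j < n" "j \<notin> T" for j using T(3) i0 that by auto
  have "real k * t \<le> (\<Sum>i\<in>T. s i)" using hyp T by simp
  also have "\<dots> \<le> (\<Sum>i\<in>T. mu)" using mu_ge by (intro sum_mono) auto
  also have "\<dots> = real k * mu" using T(2) by simp
  finally have tmu: "t \<le> mu" using k by simp
  have "(\<Sum>i<n. x i * s i) - (\<Sum>i\<in>T. s i) = (\<Sum>i<n. (x i - (if i \<in> T then 1 else 0)) * s i)"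
  proof -
    have "(\<Sum>i<n. (if i \<in> T then 1 else 0) * s i) = (\<Sum>i<n. if i \<in> T then s i else 0)"
      by (intro sum.cong) auto
    also have "\<dots> = (\<Sum>i\<in>{..<n} \<inter> T. s i)" by (simp only: sum.inter_restrict[OF finite_lessThan])
    also have "\<dots> = (\<Sum>i\<in>T. s i)" using T(1) by (simp add: Int_absorb1)
    finally have "(\<Sum>i\<in>T. s i) = (\<Sum>i<n. (if i \<in> T then 1 else 0) * s i)" ..
    thus ?thesis by (simp add: sum_subtractf left_diff_distrib)
  qed
  also have "\<dots> \<ge> (\<Sum>i<n. (x i - (if i \<in> T then 1 else 0)) * mu)"
  proof (intro sum_mono)
    fix i assume i: "i \<in> {..<n}"
    show "(x i - (if i \<in> T then 1 else 0)) * mu \<le> (x i - (if i \<in> T then 1 else 0)) * s i"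
    proof (cases "i \<in> T")
      case True
      hence "x i - 1 \<le> 0" using x i by auto
      thus ?thesis using True mu_ge[OF True] by (simp add: mult_left_mono_neg)
    next
      case False
      thus ?thesis using x i mu_le[of i] by (simp add: mult_left_mono)
    qed
  qed
  also have "(\<Sum>i<n. (x i - (if i \<in> T then 1 else 0)) * mu) = (m - real k) * mu"
  proof -
    have "(\<Sum>i<n. (if i \<in> T then 1 else 0::real)) = real k"
      using T(1,2) by (simp add: sum.inter_restrict[symmetric] Int_absorb1)
    thus ?thesis using xs by (simp add: sum_distrib_right[symmetric] sum_subtractf)
  qed
  finally have "(\<Sum>i\<in>T. s i) + (m - real k) * mu \<le> (\<Sum>i<n. x i * s i)" by simp
  moreover have "real k * t \<le> (\<Sum>i\<in>T. s i)" using hyp T by simp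
  moreover have "(m - real k) * t \<le> (m - real k) * mu" using km' tmu by (intro mult_left_mono) auto
  ultimately show ?thesis by (simp add: algebra_simps)
qed


context pq begin

lemma D_le_p: "D \<le> p"
proof -
  have h1: "ln (1-q) - ln (1-p) \<le> (1-q)/(1-p) - 1"
    using ln_le_minus_one[of "(1-q)/(1-p)"] p1 q1 by (simp add: ln_div)
  have h2: "ln q - ln p \<le> q/p - 1"
    using ln_le_minus_one[of "q/p"] p0 q0 by (simp add: ln_div)
  have a1: "(1-p) * (ln (1-q) - ln (1-p)) \<le> p - q"
  proof -
    have "(1-p) * (ln (1-q) - ln (1-p)) \<le> (1-p) * ((1-q)/(1-p) - 1)"
      using h1 p1 by (intro mult_left_mono) auto
    also have "\<dots> = p - q" using p1 by (simp add: field_simps)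
    finally show ?thesis .
  qed
  have a2: "p * (ln q - ln p) \<le> q - p"
  proof -
    have "p * (ln q - ln p) \<le> p * (q/p - 1)" using h2 p0 by (intro mult_left_mono) auto
    also have "\<dots> = q - p" using p0 by (simp add: field_simps)
    finally show ?thesis .
  qed
  have pL: "p * L = p * ln p - p * ln q + p * ln (1-q) - p * ln (1-p)" by (simp add: L_eq algebra_simps)
  have a1': "ln (1-q) - ln (1-p) - p * ln (1-q) + p * ln (1-p) \<le> p - q" using a1 by (simp add: algebra_simps)
  have a2': "p * ln q - p * ln p \<le> q - p" using a2 by (simp add: algebra_simps)
  have "ln (1-q) - ln (1-p) \<le> p * L"
    using a1' a2' pL by linarith
  thus ?thesis using L_pos LD by (simp add: D_def pos_divide_le_eq mult.commute ln_div p1 q1)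
qed

lemma L_ge: "L \<ge> ln p - ln q"
proof -
  have "ln (1-p) \<le> ln (1-q)" using qp p1 by simp
  thus ?thesis using L_eq by simp
qed

end

context sbm begin

interpretation P: pq pp qq LL DD by (rule pq_inst)

lemma c1_eq: "P.c1 = (sqrt a - sqrt b)^2 / real n"
proof -
  have "sqrt pp = sqrt a / sqrt (real n)" "sqrt qq = sqrt b / sqrt (real n)"
    by (simp_all add: pp_def qq_def real_sqrt_divide)
  hence "sqrt pp - sqrt qq = (sqrt a - sqrt b) / sqrt (real n)" by (simp add: diff_divide_distrib)
  thus ?thesis using n_pos by (simp add: power_divide)
qed

lemma W_ge: "LL * (sqrt (a+b) - DD/2) \<ge> sqrt a - sqrt b"
proof -
  have a0: "a > 0" using b0 ba by simp
  have sa: "sqrt a > 0" using a0 by simp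
  have e0: "ln pp - ln qq = ln a - ln b" using a0 b0 n_pos by (simp add: pp_def qq_def ln_div)
  have e1: "ln a - ln b = 2 * ln (sqrt a / sqrt b)"
    using a0 b0 by (simp add: ln_div ln_sqrt)
  have e2: "ln (sqrt a / sqrt b) \<ge> 1 - sqrt b / sqrt a"
  proof -
    have "ln (sqrt b / sqrt a) \<le> sqrt b / sqrt a - 1" using a0 b0 by (intro ln_le_minus_one) simp
    moreover have "ln (sqrt b / sqrt a) = - ln (sqrt a / sqrt b)" using a0 b0 by (simp add: ln_div)
    ultimately show ?thesis by simp
  qed
  have "LL \<ge> 2 - 2 * (sqrt b / sqrt a)" using P.L_ge e0 e1 e2 by linarith
  hence LLge: "LL \<ge> 2 * (1 - sqrt b / sqrt a)" by (simp add: right_diff_distrib)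
  have "pp \<le> sqrt a"
  proof (cases "a \<ge> 1")
    case True
    hence "1 \<le> sqrt a" by simp
    thus ?thesis using P.p1 by linarith
  next
    case False
    have "pp \<le> a" using a0 n_pos an b0 ba unfolding pp_def
      by (simp add: divide_le_eq)
    also have "a \<le> sqrt a"
    proof -
      have s1: "sqrt a \<le> 1" using False by simp
      have "a = sqrt a * sqrt a" using a0 by simp
      also have "\<dots> \<le> sqrt a * 1" using s1 a0 by (intro mult_left_mono) auto
      finally show ?thesis by simp
    qed
    finally show ?thesis .
  qed
  hence "DD \<le> sqrt a" using P.D_le_p by simp
  moreover have "sqrt a \<le> sqrt (a+b)" using b0 by simp
  ultimately have X: "sqrt (a+b) - DD/2 \<ge> sqrt a / 2" by linarith
  have "sqrt a - sqrt b = 2 * (1 - sqrt b / sqrt a) * (sqrt a / 2)" using sa by (simp add: field_simps)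
  also have "\<dots> \<le> LL * (sqrt (a+b) - DD/2)"
  proof (rule mult_mono[OF LLge X])
    show "0 \<le> LL" using P.L_pos by simp
    show "0 \<le> sqrt a / 2" using sa by simp
  qed
  finally show ?thesis .
qed

end


lemma expA:
  fixes L N K C lb \<kappa> s D :: real
  assumes "L \<noteq> 0" "N \<noteq> 0"
  shows "(L/2)*(K*(2*((C/2 - lb - 3*\<kappa>)/L - s))) + (L/2)*K*D - (C/N)*(K*(N-1)/2 - (K^2-K)/2)
       = K*(K*C/(2*N) - lb - 3*\<kappa> - L*(s - D/2))"
  using assms by (simp add: field_simps power2_eq_square)

lemma expB:
  fixes L N K C lb \<kappa> s D :: real
  assumes "L \<noteq> 0" "N \<noteq> 0"
  shows "(L/4)*(K*(2*((C/2 - lb - 3*\<kappa>)/L - s))) + (L/4)*K*D - (C/N)*(K*(N-1)/4)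
       = K*(C/(4*N) - lb/2 - 3/2*\<kappa> - L*(s - D/2)/2)"
  using assms by (simp add: field_simps)

lemma beta_small: "(10::real) powr (-6) \<le> 1/10"
proof -
  have "(10::real) powr (-6) \<le> 10 powr (-1)" by (rule powr_mono) auto
  also have "(10::real) powr (-1) = 1/10" by (simp add: powr_minus)
  finally show ?thesis .
qed

context sbm begin

interpretation P: pq pp qq LL DD by (rule pq_inst)

lemma frob_eq: "frob n (\<lambda>i j. (A i j - DD * 1) * (l i * l j)) (\<lambda>i j. x i) = (\<Sum>i<n. x i * sv A i)"
  unfolding frob_def sv_def by (simp add: sum_distrib_left ac_simps)

lemma binom_bound:
  assumes "0 < \<beta>" "m = \<beta> * real n"
  shows "real (n choose k) \<le> m ^ k / fact k * exp (real k * ln (1/\<beta>))"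
proof -
  have "real ((n choose k) * fact k) \<le> real (n ^ k)"
    using binomial_fact_pow[of n k] by (simp only: of_nat_le_iff)
  hence "real (n choose k) * fact k \<le> real n ^ k" by simp
  hence a: "real (n choose k) \<le> real n ^ k / fact k" by (simp add: field_simps)
  have "real n = m / \<beta>" using assms by simp
  hence "real n ^ k = (m / \<beta>) ^ k" by simp
  also have "\<dots> = m ^ k * (1/\<beta>) ^ k" by (simp add: power_divide power_one_over)
  also have "(1/\<beta>) ^ k = exp (real k * ln (1/\<beta>))"
    using assms(1) by (simp add: exp_of_nat_mult)
  finally show ?thesis using a by simp
qed

end


context sbm begin

interpretation P: pq pp qq LL DD by (rule pq_inst)

lemma main_sbm:
  fixes \<beta> \<kappa> :: real
  assumes \<beta>0: "0 < \<beta>" and \<beta>1: "\<beta> < 10 powr (-6)" and \<kappa>1: "\<kappa> \<ge> 1"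
  shows "measure_pmf.prob (SBM n a b l)
     {A. \<forall>x :: nat \<Rightarrow> real.
          ((\<forall>i<n. 0 \<le> x i \<and> x i \<le> 1) \<and> (\<Sum>i<n. x i) = \<beta> * real n) \<longrightarrow>
          frob n (\<lambda>i j. (A i j - Dfun (a / real n) (b / real n) * 1) * (l i * l j)) (\<lambda>i j. x i)
            \<ge> 2 * \<beta> * real n *
              (((sqrt a - sqrt b)\<^sup>2 / 2 - ln (1 / \<beta>) - 3 * \<kappa>) / ln (Rfun (a / real n) (b / real n))
               - sqrt (a + b))}
     \<ge> 1 - exp (- \<kappa> * \<beta> * real n) - 1 / real n ^ 3"
proof -
  let ?M = "sbm_edges n a b l"
  have r1: "ln (Rfun (a / real n) (b / real n)) = LL" by (simp add: LL_def pp_def qq_def)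
  have r2: "Dfun (a / real n) (b / real n) = DD" by (simp add: DD_def pp_def qq_def)
  define C where "C = (sqrt a - sqrt b)^2"
  define m where "m = \<beta> * real n"
  define t where "t = 2 * ((C/2 - ln (1/\<beta>) - 3*\<kappa>)/LL - sqrt (a+b))"
  define W where "W = LL * (sqrt (a+b) - DD/2)"
  define k where "k = (if m < 1 then 1 else nat \<lfloor>m\<rfloor>)"
  define G where "G = {A. \<forall>x::nat \<Rightarrow> real. ((\<forall>i<n. 0 \<le> x i \<and> x i \<le> 1) \<and> (\<Sum>i<n. x i) = m) \<longrightarrow> m * t \<le> (\<Sum>i<n. x i * sv A i)}"
  define Ks where "Ks = {S. S \<subseteq> {..<n} \<and> card S = k}"
  define Bad where "Bad = (\<Union>S\<in>Ks. {e. (\<Sum>i\<in>S. sv (adj e) i) < real k * t})"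
  have LLpos: "LL > 0" by (rule P.L_pos)
  have "n > 0" using n_pos by simp
  hence n1: "real n \<ge> 1" by simp
  have \<beta>10: "\<beta> < 1/10" using \<beta>1 beta_small by linarith
  have m0: "m > 0" using \<beta>0 n_pos by (simp add: m_def)
  have mn: "m < real n" using \<beta>10 n_pos by (simp add: m_def)
  have kk: "k \<ge> 1 \<and> m < real k + 1 \<and> (real k \<le> m \<or> k = 1)"
  proof (cases "m < 1")
    case True thus ?thesis by (auto simp: k_def)
  next
    case False
    have fl: "\<lfloor>m\<rfloor> \<ge> 1" using False by simp
    have rk: "real k = of_int \<lfloor>m\<rfloor>" using False fl by (simp add: k_def)
    have "real k \<ge> 1" using rk fl by simp
    hence "k \<ge> 1" by simp
    moreover have "m < real k + 1" unfolding rk by linarith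
    moreover have "real k \<le> m" unfolding rk by simp
    ultimately show ?thesis by simp
  qed
  hence k1: "k \<ge> 1" and kup: "m < real k + 1" and klo: "real k \<le> m \<or> k = 1" by auto
  have kn: "k \<le> n"
  proof (cases "k = 1")
    case True thus ?thesis using n_pos by simp
  next
    case False
    hence "real k \<le> m" using klo by simp
    hence "real k < real n" using mn by simp
    thus ?thesis by simp
  qed
  have a0: "a > 0" using b0 ba by simp
  have sab: "sqrt b < sqrt a" using b0 ba by simp
  have Cpos: "C > 0" using sab by (simp add: C_def)
  have sqrtC: "sqrt C = sqrt a - sqrt b" using sab by (simp add: C_def)
  have Ca: "C \<le> a"
  proof -
    have "C \<le> (sqrt a)^2" unfolding C_def using sab b0 by (intro power_mono) auto
    thus ?thesis using a0 by simp
  qed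
  have Cn: "C < real n" using Ca an by simp
  have Wge: "W \<ge> sqrt C" unfolding W_def sqrtC by (rule W_ge)
  have c1: "P.c1 = C / real n" by (simp add: c1_eq C_def)
  have Cn2: "C / real n \<le> sqrt C"
  proof -
    have "sqrt C \<le> sqrt (real n)" using Cn by simp
    also have "sqrt (real n) \<le> real n"
    proof -
      have "1 * real n \<le> real n * real n" using n1 by (intro mult_right_mono) auto
      hence "sqrt (real n) \<le> sqrt (real n * real n)" by (intro real_sqrt_le_mono) simp
      thus ?thesis by simp
    qed
    finally have "sqrt C \<le> real n" .
    hence "sqrt C * sqrt C \<le> real n * sqrt C" using Cpos by (intro mult_right_mono) auto
    hence "C \<le> real n * sqrt C" using Cpos by simp
    thus ?thesis using n_pos by (simp add: divide_le_eq mult.commute)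
  qed
  have incl: "UNIV - adj -` G \<subseteq> Bad"
  proof
    fix e assume e: "e \<in> UNIV - adj -` G"
    show "e \<in> Bad"
    proof (rule ccontr)
      assume nb: "e \<notin> Bad"
      have hyp: "real k * t \<le> (\<Sum>i\<in>S. sv (adj e) i)" if "S \<subseteq> {..<n}" "card S = k" for S
        using nb that by (auto simp: Bad_def Ks_def not_less)
      have "adj e \<in> G"
        unfolding G_def
      proof (intro CollectI allI impI)
        fix x :: "nat \<Rightarrow> real" assume x: "(\<forall>i<n. 0 \<le> x i \<and> x i \<le> 1) \<and> (\<Sum>i<n. x i) = m"
        show "m * t \<le> (\<Sum>i<n. x i * sv (adj e) i)"
          by (rule det[OF k1 kn klo hyp]) (use x in auto)
      qed
      thus False using e by simp
    qed
  qed
  have finKs: "finite Ks" unfolding Ks_def by (rule finite_subset[of _ "Pow {..<n}"]) auto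
  have cardKs: "card Ks = n choose k" unfolding Ks_def using n_subsets[of "{..<n}" k] by simp
  have bb: "real (n choose k) \<le> m ^ k / fact k * exp (real k * ln (1/\<beta>))"
    by (rule binom_bound[OF \<beta>0 m_def])
  have mk0: "0 \<le> m ^ k / fact k" using m0 by simp
  obtain Bnd where hB: "\<And>S. S \<in> Ks \<Longrightarrow> measure_pmf.prob ?M {e. (\<Sum>i\<in>S. sv (adj e) i) < real k * t} \<le> Bnd"
     and hC: "real (n choose k) * Bnd \<le> exp (-(\<kappa> * m))" and B0: "Bnd \<ge> 0"
  proof (cases "real k * C / (2 * real n) \<le> W")
    case True
    define B where "B = exp (real k * (real k * C / (2 * real n) - ln (1/\<beta>) - 3*\<kappa> - W))"
    show ?thesis
    proof (rule that)
      fix S assume S: "S \<in> Ks"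
      hence S1: "S \<subseteq> {..<n}" and S2: "card S = k" by (auto simp: Ks_def)
      have "measure_pmf.prob ?M {e. (\<Sum>i\<in>S. sv (adj e) i) < real k * t}
         \<le> exp ((LL/2) * (real k * t) + (LL/2) * real (card S) * DD) *
            exp (-(P.c1 * (real (card S) * (real n - 1) / 2 - (real (card S)^2 - real (card S)) / 2)))"
        by (rule set_bound_half[OF S1])
      also have "\<dots> = exp ((LL/2) * (real k * t) + (LL/2) * real k * DD
                 - (C / real n) * (real k * (real n - 1) / 2 - (real k^2 - real k) / 2))"
        unfolding S2 c1 by (simp add: exp_add[symmetric])
      also have "\<dots> = B"
        unfolding B_def t_def W_def using expA[of LL "real n" "real k" C "ln (1/\<beta>)" \<kappa> "sqrt (a+b)" DD] LLpos n_pos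
        by simp
      finally show "measure_pmf.prob ?M {e. (\<Sum>i\<in>S. sv (adj e) i) < real k * t} \<le> B" .
    next
      have "real (n choose k) * B \<le> (m ^ k / fact k * exp (real k * ln (1/\<beta>))) * B"
        by (intro mult_right_mono bb) (simp add: B_def)
      also have "\<dots> = m ^ k / fact k * exp (real k * (real k * C / (2 * real n) - W) - 3 * \<kappa> * real k)"
        by (simp add: B_def mult.assoc exp_add[symmetric] algebra_simps)
      also have "\<dots> \<le> m ^ k / fact k * exp (-(3 * \<kappa> * real k))"
      proof (intro mult_left_mono mk0)
        have "real k * (real k * C / (2 * real n) - W) \<le> 0"
          using True k1 by (intro mult_nonneg_nonpos) auto
        thus "exp (real k * (real k * C / (2 * real n) - W) - 3 * \<kappa> * real k) \<le> exp (-(3 * \<kappa> * real k))" by simp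
      qed
      also have "\<dots> \<le> exp (-(\<kappa> * m))" by (rule AR1[OF m0 kup k1 \<kappa>1])
      finally show "real (n choose k) * B \<le> exp (-(\<kappa> * m))" .
    next
      show "B \<ge> 0" by (simp add: B_def)
    qed
  next
    case False
    hence Wlt: "W < real k * C / (2 * real n)" by simp
    have k2: "k \<ge> 2"
    proof (rule ccontr)
      assume "\<not> k \<ge> 2" hence "k = 1" using k1 by simp
      hence "W < C / (2 * real n)" using Wlt by simp
      moreover have "C / (2 * real n) \<le> sqrt C / 2" using Cn2 by simp
      moreover have "sqrt C / 2 \<le> sqrt C" using Cpos by simp
      ultimately show False using Wge by linarith
    qed
    hence km: "real k \<le> m" using klo by auto
    have "sqrt C < m * C / (2 * real n)"
    proof -
      have "real k * C / (2 * real n) \<le> m * C / (2 * real n)"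
        using km Cpos n_pos by (intro divide_right_mono mult_right_mono) auto
      thus ?thesis using Wge Wlt by linarith
    qed
    hence "sqrt C < \<beta> * C / 2" using n_pos by (simp add: m_def)
    moreover have "\<beta> * C / 2 = sqrt C * (\<beta> * sqrt C / 2)"
    proof -
      have "sqrt C * sqrt C = C" using Cpos by simp
      hence "\<beta> * C / 2 = \<beta> * (sqrt C * sqrt C) / 2" by simp
      thus ?thesis by (simp add: algebra_simps)
    qed
    ultimately have "sqrt C * 1 < sqrt C * (\<beta> * sqrt C / 2)" by simp
    hence "1 < \<beta> * sqrt C / 2" using Cpos by (subst (asm) mult_less_cancel_left_pos) auto
    hence "2 < \<beta> * sqrt C" by simp
    hence "2 / \<beta> < sqrt C" using \<beta>0 by (simp add: pos_divide_less_eq mult.commute)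
    moreover have "2 / \<beta> = 2 * (1/\<beta>)" by simp
    ultimately have sC: "2 * (1/\<beta>) < sqrt C" by linarith
    have "4 * \<beta> \<le> 1" using \<beta>10 by simp
    hence y4: "4 \<le> 1/\<beta>" using \<beta>0 by (simp add: pos_le_divide_eq)
    have lnb: "ln (1/\<beta>) \<le> 1/\<beta> - 1" using \<beta>0 by (intro ln_le_minus_one) simp
    have Wbig: "W \<ge> ln (1/\<beta>) + 9/2" using sC Wge y4 lnb by linarith
    define B where "B = exp (real k * (C / (4 * real n) - ln (1/\<beta>) / 2 - 3/2 * \<kappa> - W / 2))"
    show ?thesis
    proof (rule that)
      fix S assume S: "S \<in> Ks"
      hence S1: "S \<subseteq> {..<n}" and S2: "card S = k" by (auto simp: Ks_def)
      have "measure_pmf.prob ?M {e. (\<Sum>i\<in>S. sv (adj e) i) < real k * t}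
         \<le> exp ((LL/4) * (real k * t) + (LL/4) * real (card S) * DD) *
            exp (-(P.c1 * (real (card S) * (real n - 1) / 4)))"
        by (rule set_bound_quarter[OF S1])
      also have "\<dots> = exp ((LL/4) * (real k * t) + (LL/4) * real k * DD
                 - (C / real n) * (real k * (real n - 1) / 4))"
        unfolding S2 c1 by (simp add: exp_add[symmetric])
      also have "\<dots> = B"
        unfolding B_def t_def W_def using expB[of LL "real n" "real k" C "ln (1/\<beta>)" \<kappa> "sqrt (a+b)" DD] LLpos n_pos
        by simp
      finally show "measure_pmf.prob ?M {e. (\<Sum>i\<in>S. sv (adj e) i) < real k * t} \<le> B" .
    next
      have "real (n choose k) * B \<le> (m ^ k / fact k * exp (real k * ln (1/\<beta>))) * B"
        by (intro mult_right_mono bb) (simp add: B_def)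
      also have "\<dots> = m ^ k / fact k * exp (real k * (C / (4 * real n) + ln (1/\<beta>) / 2 - 3/2 * \<kappa> - W / 2))"
        by (simp add: B_def mult.assoc exp_add[symmetric] algebra_simps)
      also have "\<dots> \<le> m ^ k / fact k * exp (real k * (-(3/2) * \<kappa> - 2))"
      proof (intro mult_left_mono mk0)
        have "C / (4 * real n) \<le> 1/4" using Cn n_pos by (simp add: divide_le_eq)
        hence "C / (4 * real n) + ln (1/\<beta>) / 2 - 3/2 * \<kappa> - W / 2 \<le> -(3/2) * \<kappa> - 2"
          using Wbig by linarith
        hence "real k * (C / (4 * real n) + ln (1/\<beta>) / 2 - 3/2 * \<kappa> - W / 2) \<le> real k * (-(3/2) * \<kappa> - 2)"
          by (intro mult_left_mono) auto
        thus "exp (real k * (C / (4 * real n) + ln (1/\<beta>) / 2 - 3/2 * \<kappa> - W / 2)) \<le> exp (real k * (-(3/2) * \<kappa> - 2))"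
          by simp
      qed
      also have "\<dots> \<le> exp (-(\<kappa> * m))" by (rule AR2[OF m0 kup k2 \<kappa>1])
      finally show "real (n choose k) * B \<le> exp (-(\<kappa> * m))" .
    next
      show "B \<ge> 0" by (simp add: B_def)
    qed
  qed
  have "measure_pmf.prob ?M Bad \<le> (\<Sum>S\<in>Ks. measure_pmf.prob ?M {e. (\<Sum>i\<in>S. sv (adj e) i) < real k * t})"
    unfolding Bad_def by (rule measure_pmf.finite_measure_subadditive_finite[OF finKs]) auto
  also have "\<dots> \<le> real (card Ks) * Bnd"
    using hB by (intro sum_bounded_above) auto
  also have "\<dots> \<le> exp (-(\<kappa> * m))" using hC cardKs by simp
  finally have pBad: "measure_pmf.prob ?M Bad \<le> exp (-(\<kappa> * m))" .
  have c1': "measure_pmf.prob ?M (UNIV - adj -` G) \<le> measure_pmf.prob ?M Bad"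
    by (rule measure_pmf.finite_measure_mono[OF incl]) simp
  have c2: "measure_pmf.prob ?M (UNIV - adj -` G) = 1 - measure_pmf.prob ?M (adj -` G)"
    using measure_pmf.prob_compl[of "adj -` G" ?M] by simp
  have c3: "measure_pmf.prob (SBM n a b l) G = measure_pmf.prob ?M (adj -` G)"
    unfolding SBM_def by (rule measure_map_pmf)
  have pG: "measure_pmf.prob (SBM n a b l) G \<ge> 1 - exp (-(\<kappa> * m))"
    using c1' c2 c3 pBad by linarith
  have GS: "G \<subseteq> {A. \<forall>x :: nat \<Rightarrow> real.
          ((\<forall>i<n. 0 \<le> x i \<and> x i \<le> 1) \<and> (\<Sum>i<n. x i) = \<beta> * real n) \<longrightarrow>
          frob n (\<lambda>i j. (A i j - Dfun (a / real n) (b / real n) * 1) * (l i * l j)) (\<lambda>i j. x i)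
            \<ge> 2 * \<beta> * real n *
              (((sqrt a - sqrt b)\<^sup>2 / 2 - ln (1 / \<beta>) - 3 * \<kappa>) / ln (Rfun (a / real n) (b / real n))
               - sqrt (a + b))}"
  proof
    fix A assume A: "A \<in> G"
    have rhs: "2 * \<beta> * real n * (((sqrt a - sqrt b)\<^sup>2 / 2 - ln (1 / \<beta>) - 3 * \<kappa>) / LL - sqrt (a + b)) = m * t"
      by (simp add: m_def t_def C_def)
    show "A \<in> {A. \<forall>x :: nat \<Rightarrow> real.
          ((\<forall>i<n. 0 \<le> x i \<and> x i \<le> 1) \<and> (\<Sum>i<n. x i) = \<beta> * real n) \<longrightarrow>
          frob n (\<lambda>i j. (A i j - Dfun (a / real n) (b / real n) * 1) * (l i * l j)) (\<lambda>i j. x i)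
            \<ge> 2 * \<beta> * real n *
              (((sqrt a - sqrt b)\<^sup>2 / 2 - ln (1 / \<beta>) - 3 * \<kappa>) / ln (Rfun (a / real n) (b / real n))
               - sqrt (a + b))}"
      unfolding r1 r2 frob_eq rhs using A by (simp add: G_def m_def)
  qed
  have pS: "measure_pmf.prob (SBM n a b l) G \<le> measure_pmf.prob (SBM n a b l) {A. \<forall>x :: nat \<Rightarrow> real.
          ((\<forall>i<n. 0 \<le> x i \<and> x i \<le> 1) \<and> (\<Sum>i<n. x i) = \<beta> * real n) \<longrightarrow>
          frob n (\<lambda>i j. (A i j - Dfun (a / real n) (b / real n) * 1) * (l i * l j)) (\<lambda>i j. x i)
            \<ge> 2 * \<beta> * real n *
              (((sqrt a - sqrt b)\<^sup>2 / 2 - ln (1 / \<beta>) - 3 * \<kappa>) / ln (Rfun (a / real n) (b / real n))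
               - sqrt (a + b))}"
    by (rule measure_pmf.finite_measure_mono[OF GS]) simp
  have ex: "exp (- \<kappa> * \<beta> * real n) = exp (-(\<kappa> * m))" by (simp add: m_def)
  have n3: "1 / real n ^ 3 \<ge> 0" by simp
  show ?thesis using pS pG n3 unfolding ex by linarith
qed
end

theorem mainTheorem7:
  fixes n :: nat and a b \<beta> \<kappa> :: real and l :: "nat \<Rightarrow> real"
  assumes "0 < b" "b < a" "a < real n"
    and "\<forall>i<n. l i = -1 \<or> l i = 1"
    and "0 < \<beta>" "\<beta> < 10 powr (-6)" "\<kappa> \<ge> 1"
  shows "measure_pmf.prob (SBM n a b l)
     {A. \<forall>x :: nat \<Rightarrow> real.
          ((\<forall>i<n. 0 \<le> x i \<and> x i \<le> 1) \<and> (\<Sum>i<n. x i) = \<beta> * real n) \<longrightarrow>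
          frob n (\<lambda>i j. (A i j - Dfun (a / real n) (b / real n) * 1) * (l i * l j)) (\<lambda>i j. x i)
            \<ge> 2 * \<beta> * real n *
              (((sqrt a - sqrt b)\<^sup>2 / 2 - ln (1 / \<beta>) - 3 * \<kappa>) / ln (Rfun (a / real n) (b / real n))
               - sqrt (a + b))}
     \<ge> 1 - exp (- \<kappa> * \<beta> * real n) - 1 / real n ^ 3"
proof -
  interpret S: sbm n a b l using assms(1-4) by unfold_locales auto
  show ?thesis by (rule S.main_sbm) (use assms in auto)
qed

end
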